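(* Fix $0<\tau<1$. For $n\ge1$ let $W_n=(w_{ij})$ be an $n\times n$ matrix of independent $\mathcal N(0,1)$ entries. For a submatrix $U$ of $W_n$ with index set $A\times B$ ($A,B\subseteq\{1,\dots,n\}$, $|A|,|B|\ge2$, not necessarily contiguous) define \[ G(U)=\min\left\{\frac{1}{(|A|-1)(|B|-1)}\sum_{i\in A,j\in B}(w_{ij}-a_i-b_j-c)^2\right\}, \] the minimum over all real constants $\{a_i\}_{i\in A},\{b_j\}_{j\in B},c$, and let $L_\tau(W_n)$ be the largest $k$ such that $W_n$ contains a $k\times k$ submatrix $U$ with $G(U)\le\tau$. Let $h(\tau)=1-\tau-\ln(2-\tau)$ and \[ t(n,\tau)=\frac{4}{h(\tau)}\ln n-\frac{4}{h(\tau)}\ln\!\left(\frac{4}{h(\tau)}\ln n\right)+\frac{4}{h(\tau)}+2 . \] Then for every $\epsilon>0$, when $n$ is sufficiently large, \[ P\big(L_\tau(W_n)\ge t(n,\tau)+r\big)\;\le\;\frac{4}{h(\tau)}\left(\frac{\ln n}{h(\tau)}\right)^{2r+2+\epsilon}n^{-2r} \] for every $r=1,\dots,n$. *)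

theory Defs
  imports "HOL-Probability.Probability"
begin

definition gauss_matrix :: "nat \<Rightarrow> (nat \<times> nat \<Rightarrow> real) measure" where
  "gauss_matrix n = PiM ({1..n} \<times> {1..n}) (\<lambda>_. density lborel std_normal_density)"

text \<open>G(U) for the submatrix with index set A x B: minimum over real a_i, b_j, c
  of the normalised residual sum of squares (the minimum is attained, so it equals the infimum).\<close>
definition G_sub :: "(nat \<times> nat \<Rightarrow> real) \<Rightarrow> nat set \<Rightarrow> nat set \<Rightarrow> real" where
  "G_sub W A B = Inf {(1 / ((real (card A) - 1) * (real (card B) - 1))) *
        (\<Sum>i\<in>A. \<Sum>j\<in>B. (W (i, j) - a i - b j - c)\<^sup>2) |
        (a :: nat \<Rightarrow> real) (b :: nat \<Rightarrow> real) (c :: real). True}"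

definition L_tau :: "real \<Rightarrow> nat \<Rightarrow> (nat \<times> nat \<Rightarrow> real) \<Rightarrow> nat" where
  "L_tau \<tau> n W = Max ({k. \<exists>A B. A \<subseteq> {1..n} \<and> B \<subseteq> {1..n} \<and> card A = k \<and> card B = k
        \<and> k \<ge> 2 \<and> G_sub W A B \<le> \<tau>} \<union> {0})"

definition h_fun :: "real \<Rightarrow> real" where
  "h_fun \<tau> = 1 - \<tau> - ln (2 - \<tau>)"

definition t_fun :: "nat \<Rightarrow> real \<Rightarrow> real" where
  "t_fun n \<tau> = 4 / h_fun \<tau> * ln (real n) - 4 / h_fun \<tau> * ln (4 / h_fun \<tau> * ln (real n))
     + 4 / h_fun \<tau> + 2"

end

theory Submission imports Defs begin

lemma nn_integral_normal_density_1:
  assumes "\<sigma> > 0"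
  shows "(\<integral>\<^sup>+z. ennreal (normal_density m \<sigma> z) \<partial>lborel) = 1"
proof -
  interpret prob_space "density lborel (normal_density m \<sigma>)" using assms by (rule prob_space_normal_density)
  have "emeasure (density lborel (normal_density m \<sigma>)) (space lborel) = 1"
    using emeasure_space_1 by simp
  thus ?thesis by (simp add: emeasure_density)
qed

lemma gauss1:
  fixes l mu :: real assumes l: "l > 0"
  shows "(\<integral>\<^sup>+z. ennreal (exp (-l*(z-mu)^2)) \<partial>(density lborel std_normal_density))
     = ennreal ((1+2*l) powr (-1/2) * exp (-(l/(1+2*l))*mu^2))"
proof -
  define s where "s = 1 + 2*l"
  have s: "s > 0" using l by (simp add: s_def)
  define m where "m = 2*l*mu/s"
  define \<sigma> where "\<sigma> = 1 / sqrt s"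
  have \<sigma>: "\<sigma> > 0" using s by (simp add: \<sigma>_def)
  have key: "std_normal_density z * exp (-l*(z-mu)^2) =
     (s powr (-1/2) * exp (-(l/s)*mu^2)) * normal_density m \<sigma> z" for z
  proof -
    have sq: "\<sigma>^2 = 1/s" using s by (simp add: \<sigma>_def power_divide)
    have h1: "(s/2)*(z-m)^2 = (s/2)*z^2 - 2*l*mu*z + 2*l^2*mu^2/s"
      unfolding m_def using s by (simp add: power2_eq_square field_simps)
    have h2: "2*l^2*mu^2/s + (l/s)*mu^2 = l*mu^2"
    proof -
      have "2*l^2*mu^2 + l*mu^2 = s*l*mu^2" by (simp add: s_def algebra_simps power2_eq_square)
      thus ?thesis using s by (simp add: field_simps)
    qed
    have h3: "(z-m)^2/(2*\<sigma>^2) = (s/2)*(z-m)^2" unfolding sq using s by simp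
    have e: "- z\<^sup>2 / 2 + (-l*(z-mu)^2) = -(l/s)*mu^2 + (- ((z-m)^2/(2*\<sigma>^2)))"
    proof -
      have h4: "(s/2)*z^2 = z^2/2 + l*z^2" by (simp add: s_def algebra_simps)
      have h5: "l*(z-mu)^2 = l*z^2 - 2*l*mu*z + l*mu^2" by (simp add: power2_diff algebra_simps)
      show ?thesis unfolding h3 h1 using h2 h4 h5 by linarith
    qed
    have c: "1 / sqrt (2 * pi) = s powr (-1/2) * (1 / sqrt (2*pi*\<sigma>^2))"
      unfolding sq using s
      by (simp add: powr_minus powr_half_sqrt real_sqrt_mult real_sqrt_divide field_simps)
    have "std_normal_density z * exp (-l*(z-mu)^2) = (1/sqrt(2*pi)) * exp (- z\<^sup>2 / 2 + (-l*(z-mu)^2))"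
      unfolding std_normal_density_def exp_add by simp
    also have "\<dots> = (s powr (-1/2) * (1 / sqrt (2*pi*\<sigma>^2))) * exp (-(l/s)*mu^2 + (- ((z-m)^2/(2*\<sigma>^2))))"
      by (simp only: c e)
    also have "\<dots> = (s powr (-1/2) * exp (-(l/s)*mu^2)) * normal_density m \<sigma> z"
      unfolding normal_density_def exp_add by simp
    finally show ?thesis .
  qed
  have "(\<integral>\<^sup>+z. ennreal (exp (-l*(z-mu)^2)) \<partial>(density lborel std_normal_density))
     = (\<integral>\<^sup>+z. ennreal (std_normal_density z) * ennreal (exp (-l*(z-mu)^2)) \<partial>lborel)"
    by (subst nn_integral_density) auto
  also have "\<dots> = (\<integral>\<^sup>+z. ennreal (s powr (-1/2) * exp (-(l/s)*mu^2)) * ennreal (normal_density m \<sigma> z) \<partial>lborel)"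
  proof (intro nn_integral_cong)
    fix z
    have "ennreal (std_normal_density z) * ennreal (exp (-l*(z-mu)^2))
       = ennreal (std_normal_density z * exp (-l*(z-mu)^2))"
      by (rule ennreal_mult[symmetric]) auto
    also have "\<dots> = ennreal (s powr (-1/2) * exp (-(l/s)*mu^2)) * ennreal (normal_density m \<sigma> z)"
      unfolding key by (rule ennreal_mult) (auto simp: normal_density_nonneg)
    finally show "ennreal (std_normal_density z) * ennreal (exp (-l*(z-mu)^2))
       = ennreal (s powr (-1/2) * exp (-(l/s)*mu^2)) * ennreal (normal_density m \<sigma> z)" .
  qed
  also have "\<dots> = ennreal (s powr (-1/2) * exp (-(l/s)*mu^2))"
    by (subst nn_integral_cmult) (auto simp: nn_integral_normal_density_1[OF \<sigma>])
  finally show ?thesis by (simp add: s_def)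
qed

lemma psf_lborel: "product_sigma_finite (\<lambda>_::'i. lborel :: real measure)"
  unfolding product_sigma_finite_def using sigma_finite_lborel by simp

lemma affine_PiM:
  fixes P :: "'i set" and c :: real and t :: "'i \<Rightarrow> real"
  assumes "finite P" "c \<noteq> 0"
  shows "F \<in> borel_measurable (PiM P (\<lambda>_. lborel)) \<Longrightarrow>
    (\<integral>\<^sup>+\<theta>. F \<theta> \<partial>PiM P (\<lambda>_. lborel)) =
     ennreal (\<bar>c\<bar> ^ card P) * (\<integral>\<^sup>+\<theta>. F (restrict (\<lambda>x. t x + c * \<theta> x) P) \<partial>PiM P (\<lambda>_. lborel))"
  using assms(1)
proof (induction P arbitrary: F rule: finite_induct)
  case empty
  interpret product_sigma_finite "\<lambda>_::'i. lborel :: real measure" by (rule psf_lborel)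
  show ?case by (simp add: PiM_empty nn_integral_count_space_finite)
next
  case (insert i P)
  interpret product_sigma_finite "\<lambda>_::'i. lborel :: real measure" by (rule psf_lborel)
  interpret PP: sigma_finite_measure "PiM P (\<lambda>_::'i. lborel :: real measure)"
    using sigma_finite insert by blast
  note insert.prems[measurable]
  let ?R = "\<lambda>x. restrict (\<lambda>z. t z + c * x z) P"
  have Rm[measurable]: "?R \<in> measurable (PiM P (\<lambda>_. lborel)) (PiM P (\<lambda>_. lborel))"
    by measurable
  have m1: "(\<lambda>x. F (x(i := y))) \<in> borel_measurable (PiM P (\<lambda>_. lborel))" for y
    by (rule measurable_compose[OF _ insert.prems]) (rule measurable_fun_upd[where J=P]; auto)
  have Gm: "(\<lambda>y. \<integral>\<^sup>+x. F ((?R x)(i := y)) \<partial>PiM P (\<lambda>_. lborel)) \<in> borel_measurable borel"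
  proof -
    have "(\<lambda>p. F ((?R (snd p))(i := fst p))) \<in> borel_measurable (borel \<Otimes>\<^sub>M PiM P (\<lambda>_. lborel))"
    proof (rule measurable_compose[OF _ insert.prems])
      show "(\<lambda>p. (?R (snd p))(i := fst p)) \<in> measurable (borel \<Otimes>\<^sub>M PiM P (\<lambda>_. lborel)) (PiM (insert i P) (\<lambda>_. lborel))"
        by (rule measurable_fun_upd[where J=P]) (auto intro: measurable_compose[OF measurable_snd Rm])
    qed
    thus ?thesis using PP.borel_measurable_nn_integral[of "\<lambda>y x. F ((?R x)(i := y))" borel]
      by (simp add: split_beta')
  qed
  have "(\<integral>\<^sup>+\<theta>. F \<theta> \<partial>PiM (insert i P) (\<lambda>_. lborel))
      = (\<integral>\<^sup>+y. (\<integral>\<^sup>+x. F (x(i := y)) \<partial>PiM P (\<lambda>_. lborel)) \<partial>lborel)"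
    by (rule product_nn_integral_insert_rev) (use insert in auto)
  also have "\<dots> = (\<integral>\<^sup>+y. ennreal (\<bar>c\<bar> ^ card P) * (\<integral>\<^sup>+x. F ((?R x)(i := y)) \<partial>PiM P (\<lambda>_. lborel)) \<partial>lborel)"
    by (intro nn_integral_cong insert.IH m1)
  also have "\<dots> = ennreal (\<bar>c\<bar> ^ card P) * (\<integral>\<^sup>+y. (\<integral>\<^sup>+x. F ((?R x)(i := y)) \<partial>PiM P (\<lambda>_. lborel)) \<partial>lborel)"
    by (rule nn_integral_cmult) (use Gm in simp)
  also have "(\<integral>\<^sup>+y. (\<integral>\<^sup>+x. F ((?R x)(i := y)) \<partial>PiM P (\<lambda>_. lborel)) \<partial>lborel)
     = ennreal \<bar>c\<bar> * (\<integral>\<^sup>+y. (\<integral>\<^sup>+x. F ((?R x)(i := t i + c * y)) \<partial>PiM P (\<lambda>_. lborel)) \<partial>lborel)"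
    using nn_integral_real_affine[OF Gm \<open>c \<noteq> 0\<close>, of "t i"] by simp
  also have "(\<integral>\<^sup>+y. (\<integral>\<^sup>+x. F ((?R x)(i := t i + c * y)) \<partial>PiM P (\<lambda>_. lborel)) \<partial>lborel)
     = (\<integral>\<^sup>+y. (\<integral>\<^sup>+x. F (restrict (\<lambda>z. t z + c * (x(i := y)) z) (insert i P)) \<partial>PiM P (\<lambda>_. lborel)) \<partial>lborel)"
  proof (intro nn_integral_cong arg_cong[where f=F])
    fix y x assume "x \<in> space (PiM P (\<lambda>_::'i. lborel :: real measure))"
    show "(?R x)(i := t i + c * y) = restrict (\<lambda>z. t z + c * (x(i := y)) z) (insert i P)"
      using insert(2) by (auto simp: restrict_def fun_eq_iff)
  qed
  also have "\<dots> = (\<integral>\<^sup>+\<theta>. F (restrict (\<lambda>z. t z + c * \<theta> z) (insert i P)) \<partial>PiM (insert i P) (\<lambda>_. lborel))"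
    by (rule product_nn_integral_insert_rev[symmetric]) (use insert in auto)
  finally show ?case using insert
    by (simp add: mult.assoc[symmetric] ennreal_mult'[symmetric] mult.commute restrict_def)
qed

lemma gauss_1d:
  fixes a :: real assumes a: "a > 0"
  shows "(\<integral>\<^sup>+z. ennreal (exp (-a*z^2)) \<partial>lborel) = ennreal (sqrt (pi/a))"
proof -
  define \<sigma> where "\<sigma> = sqrt (1/(2*a))"
  have \<sigma>: "\<sigma> > 0" using a by (simp add: \<sigma>_def)
  have sq: "\<sigma>^2 = 1/(2*a)" using a by (simp add: \<sigma>_def)
  have eq: "exp (-a*z^2) = sqrt (pi/a) * normal_density 0 \<sigma> z" for z
  proof -
    have "sqrt (2*pi*\<sigma>^2) = sqrt (pi/a)" unfolding sq by simp
    moreover have "(z-0)^2/(2*\<sigma>^2) = a*z^2" unfolding sq using a by simp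
    ultimately show ?thesis unfolding normal_density_def using a by simp
  qed
  have "(\<integral>\<^sup>+z. ennreal (exp (-a*z^2)) \<partial>lborel) = (\<integral>\<^sup>+z. ennreal (sqrt (pi/a)) * ennreal (normal_density 0 \<sigma> z) \<partial>lborel)"
    using a by (intro nn_integral_cong, subst eq) (simp add: ennreal_mult)
  also have "\<dots> = ennreal (sqrt (pi/a))"
    by (subst nn_integral_cmult) (auto simp: nn_integral_normal_density_1[OF \<sigma>])
  finally show ?thesis .
qed

lemma gauss_prod:
  fixes P :: "'i set" and a :: real
  assumes P: "finite P" and a: "a > 0"
  shows "(\<integral>\<^sup>+\<theta>. ennreal (exp (-a * (\<Sum>x\<in>P. (\<theta> x)^2))) \<partial>PiM P (\<lambda>_. lborel)) = ennreal (sqrt (pi/a) ^ card P)"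
proof -
  interpret product_sigma_finite "\<lambda>_::'i. lborel :: real measure" by (rule psf_lborel)
  have "(\<integral>\<^sup>+\<theta>. ennreal (exp (-a * (\<Sum>x\<in>P. (\<theta> x)^2))) \<partial>PiM P (\<lambda>_. lborel))
     = (\<integral>\<^sup>+\<theta>. (\<Prod>x\<in>P. ennreal (exp (-a * (\<theta> x)^2))) \<partial>PiM P (\<lambda>_. lborel))"
    by (intro nn_integral_cong) (simp add: prod_ennreal sum_distrib_left exp_sum[OF P, symmetric])
  also have "\<dots> = (\<Prod>x\<in>P. \<integral>\<^sup>+z. ennreal (exp (-a*z^2)) \<partial>lborel)"
    by (rule product_nn_integral_prod[OF P]) simp
  also have "\<dots> = ennreal (sqrt (pi/a) ^ card P)"
    using gauss_1d[OF a] a by (simp add: ennreal_power)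
  finally show ?thesis .
qed

definition rowm :: "(nat \<times> nat \<Rightarrow> real) \<Rightarrow> nat set \<Rightarrow> nat set \<Rightarrow> nat \<Rightarrow> real" where
  "rowm W A B i = (\<Sum>j\<in>B. W (i,j)) / real (card B)"
definition colm :: "(nat \<times> nat \<Rightarrow> real) \<Rightarrow> nat set \<Rightarrow> nat set \<Rightarrow> nat \<Rightarrow> real" where
  "colm W A B j = (\<Sum>i\<in>A. W (i,j)) / real (card A)"
definition totm :: "(nat \<times> nat \<Rightarrow> real) \<Rightarrow> nat set \<Rightarrow> nat set \<Rightarrow> real" where
  "totm W A B = (\<Sum>i\<in>A. \<Sum>j\<in>B. W (i,j)) / (real (card A) * real (card B))"
definition resid where
  "resid W A B i j = W (i,j) - rowm W A B i - colm W A B j + totm W A B"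
definition rss where
  "rss W A B = (\<Sum>i\<in>A. \<Sum>j\<in>B. (resid W A B i j)^2)"

lemma resid_row0:
  assumes "finite B" "B \<noteq> {}" "finite A" "A \<noteq> {}"
  shows "(\<Sum>j\<in>B. resid W A B i j) = 0"
proof -
  have kb: "real (card B) > 0" and ka: "real (card A) > 0" using assms by auto
  have s1: "(\<Sum>j\<in>B. W (i,j)) = real (card B) * rowm W A B i" using kb by (simp add: rowm_def)
  have s2: "(\<Sum>j\<in>B. colm W A B j) = real (card B) * totm W A B"
    using ka kb by (simp add: colm_def totm_def sum_divide_distrib[symmetric] sum.swap[of _ B A])
  show ?thesis unfolding resid_def by (simp add: sum.distrib sum_subtractf s1 s2)
qed

lemma resid_col0:
  assumes "finite B" "B \<noteq> {}" "finite A" "A \<noteq> {}"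
  shows "(\<Sum>i\<in>A. resid W A B i j) = 0"
proof -
  have kb: "real (card B) > 0" and ka: "real (card A) > 0" using assms by auto
  have s1: "(\<Sum>i\<in>A. W (i,j)) = real (card A) * colm W A B j" using ka by (simp add: colm_def)
  have s2: "(\<Sum>i\<in>A. rowm W A B i) = real (card A) * totm W A B"
    using ka kb by (simp add: rowm_def totm_def sum_divide_distrib[symmetric])
  show ?thesis unfolding resid_def by (simp add: sum.distrib sum_subtractf s1 s2)
qed

lemma rss_le:
  assumes "finite B" "B \<noteq> {}" "finite A" "A \<noteq> {}"
  shows "rss W A B \<le> (\<Sum>i\<in>A. \<Sum>j\<in>B. (W (i,j) - a i - b j - c)^2)"
proof -
  define r where "r i j = resid W A B i j" for i j
  define \<alpha> where "\<alpha> i = rowm W A B i - a i" for i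
  define \<beta> where "\<beta> j = colm W A B j - totm W A B - b j - c" for j
  have dec: "W (i,j) - a i - b j - c = r i j + (\<alpha> i + \<beta> j)" for i j
    unfolding r_def \<alpha>_def \<beta>_def resid_def by simp
  have c1: "(\<Sum>i\<in>A. \<Sum>j\<in>B. r i j * \<alpha> i) = 0"
    using resid_row0[OF assms] by (simp add: r_def sum_distrib_right[symmetric])
  have c2: "(\<Sum>i\<in>A. \<Sum>j\<in>B. r i j * \<beta> j) = 0"
  proof -
    have "(\<Sum>i\<in>A. \<Sum>j\<in>B. r i j * \<beta> j) = (\<Sum>j\<in>B. \<Sum>i\<in>A. r i j * \<beta> j)" by (rule sum.swap)
    also have "\<dots> = (\<Sum>j\<in>B. (\<Sum>i\<in>A. r i j) * \<beta> j)" by (simp add: sum_distrib_right)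
    also have "\<dots> = 0" using resid_col0[OF assms] by (simp add: r_def)
    finally show ?thesis .
  qed
  have "(\<Sum>i\<in>A. \<Sum>j\<in>B. (W (i,j) - a i - b j - c)^2)
      = (\<Sum>i\<in>A. \<Sum>j\<in>B. (r i j)^2 + (\<alpha> i + \<beta> j)^2 + 2 * (r i j * \<alpha> i) + 2 * (r i j * \<beta> j))"
    unfolding dec by (intro sum.cong refl) (simp add: power2_eq_square algebra_simps)
  also have "\<dots> = rss W A B + (\<Sum>i\<in>A. \<Sum>j\<in>B. (\<alpha> i + \<beta> j)^2) + 2 * (\<Sum>i\<in>A. \<Sum>j\<in>B. r i j * \<alpha> i) + 2 * (\<Sum>i\<in>A. \<Sum>j\<in>B. r i j * \<beta> j)"
    by (simp add: sum.distrib sum_distrib_left rss_def r_def)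
  also have "\<dots> = rss W A B + (\<Sum>i\<in>A. \<Sum>j\<in>B. (\<alpha> i + \<beta> j)^2)" using c1 c2 by simp
  also have "\<dots> \<ge> rss W A B" by (simp add: sum_nonneg)
  finally show ?thesis .
qed

lemma rss_eq:
  "rss W A B = (\<Sum>i\<in>A. \<Sum>j\<in>B. (W (i,j) - rowm W A B i - colm W A B j - (- totm W A B))^2)"
  unfolding rss_def resid_def by simp

lemma G_sub_rss:
  assumes "finite B" "card B \<ge> 2" "finite A" "card A \<ge> 2"
  shows "G_sub W A B = rss W A B / ((real (card A) - 1) * (real (card B) - 1))"
proof -
  have ne: "B \<noteq> {}" "A \<noteq> {}" using assms by auto
  define m where "m = (real (card A) - 1) * (real (card B) - 1)"
  have m: "m > 0" using assms by (simp add: m_def)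
  have "G_sub W A B = Inf {(1/m) * (\<Sum>i\<in>A. \<Sum>j\<in>B. (W (i, j) - a i - b j - c)\<^sup>2) | a b c. True}"
    unfolding G_sub_def m_def ..
  also have "\<dots> = (1/m) * rss W A B"
  proof (rule cInf_eq_minimum)
    show "(1/m) * rss W A B \<in> {(1/m) * (\<Sum>i\<in>A. \<Sum>j\<in>B. (W (i, j) - a i - b j - c)\<^sup>2) | a b c. True}"
      unfolding mem_Collect_eq
      by (rule exI[of _ "rowm W A B"], rule exI[of _ "colm W A B"], rule exI[of _ "- totm W A B"])
         (simp only: rss_eq[of W A B] simp_thms)
  next
    fix x assume "x \<in> {(1/m) * (\<Sum>i\<in>A. \<Sum>j\<in>B. (W (i, j) - a i - b j - c)\<^sup>2) | a b c. True}"
    then obtain a b c where x: "x = (1/m) * (\<Sum>i\<in>A. \<Sum>j\<in>B. (W (i, j) - a i - b j - c)\<^sup>2)" by blast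
    show "(1/m) * rss W A B \<le> x" unfolding x using rss_le[OF assms(1) ne(1) assms(3) ne(2)] m
      by (intro mult_left_mono) auto
  qed
  finally show ?thesis by (simp add: m_def)
qed

locale twoway =
  fixes n :: nat and A B :: "nat set" and j0 :: nat
  assumes AB: "A \<subseteq> {1..n}" "B \<subseteq> {1..n}" and j0: "j0 \<in> B" and Ane: "A \<noteq> {}"
begin

lemma finA: "finite A" and finB: "finite B"
  using AB finite_subset by blast+

definition PS :: "(nat + nat) set" where "PS = Inl ` A \<union> Inr ` (B - {j0})"
definition mu :: "(nat + nat \<Rightarrow> real) \<Rightarrow> nat \<Rightarrow> nat \<Rightarrow> real" where
  "mu \<theta> i j = \<theta> (Inl i) + (if j = j0 then 0 else \<theta> (Inr j))"
definition fW :: "(nat \<times> nat \<Rightarrow> real) \<Rightarrow> (nat + nat \<Rightarrow> real) \<Rightarrow> real" where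
  "fW W \<theta> = (\<Sum>i\<in>A. \<Sum>j\<in>B. (W (i,j) - mu \<theta> i j)^2)"
definition qf :: "(nat + nat \<Rightarrow> real) \<Rightarrow> real" where
  "qf \<theta> = (\<Sum>i\<in>A. \<Sum>j\<in>B. (mu \<theta> i j)^2)"
abbreviation Th :: "(nat + nat \<Rightarrow> real) measure" where "Th \<equiv> PiM PS (\<lambda>_. lborel)"
definition J :: "real \<Rightarrow> ennreal" where "J l = (\<integral>\<^sup>+\<theta>. ennreal (exp (-l * qf \<theta>)) \<partial>Th)"

lemma finPS: "finite PS" unfolding PS_def using finA finB by simp

lemma cardPS: "card PS = card A + card B - 1"
proof -
  have "card PS = card (Inl ` A :: (nat+nat) set) + card (Inr ` (B - {j0}) :: (nat+nat) set)"
    unfolding PS_def by (rule card_Un_disjoint) (use finA finB in auto)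
  also have "\<dots> = card A + card (B - {j0})"
    by (simp add: card_image)
  also have "\<dots> = card A + card B - 1"
  proof -
    have "card B > 0" using j0 finB card_gt_0_iff by blast
    thus ?thesis using j0 finB by (simp add: card_Diff_singleton)
  qed
  finally show ?thesis .
qed

lemma mu_restrict:
  assumes "i \<in> A" "j \<in> B"
  shows "mu (restrict (\<lambda>x. t x + c * \<theta> x) PS) i j = mu t i j + c * mu \<theta> i j"
  using assms unfolding mu_def PS_def by (auto simp: algebra_simps)

lemma mu_meas[measurable]:
  assumes "i \<in> A" "j \<in> B"
  shows "(\<lambda>\<theta>. mu \<theta> i j) \<in> borel_measurable Th"
proof -
  have 1: "(\<lambda>\<theta>. \<theta> (Inl i)) \<in> borel_measurable Th"
    using measurable_component_singleton[of "Inl i" PS "\<lambda>_. lborel"] assms by (simp add: PS_def)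
  show ?thesis
  proof (cases "j = j0")
    case True thus ?thesis using 1 by (simp add: mu_def)
  next
    case False
    have 2: "(\<lambda>\<theta>. \<theta> (Inr j)) \<in> borel_measurable Th"
      using measurable_component_singleton[of "Inr j" PS "\<lambda>_. lborel"] assms False by (simp add: PS_def)
    show ?thesis using 1 2 False by (simp add: mu_def)
  qed
qed

lemma qf_meas[measurable]: "qf \<in> borel_measurable Th"
  unfolding qf_def by (intro borel_measurable_sum borel_measurable_power mu_meas) auto

lemma fW_meas[measurable]: "fW W \<in> borel_measurable Th"
  unfolding fW_def by (intro borel_measurable_sum borel_measurable_power borel_measurable_diff mu_meas) auto

lemma J_pos: "J l > 0"
proof (rule ccontr)
  interpret product_sigma_finite "\<lambda>_::nat+nat. lborel :: real measure" by (rule psf_lborel)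
  assume "\<not> J l > 0"
  hence "J l = 0" by simp
  hence "AE \<theta> in Th. ennreal (exp (-l * qf \<theta>)) = 0"
    unfolding J_def by (subst (asm) nn_integral_0_iff_AE) auto
  hence "AE \<theta> in Th. False" by simp
  hence "emeasure Th (space Th) = 0"
    by (subst (asm) AE_iff_measurable[where N="space Th"]) auto
  moreover have "emeasure Th (space Th) = (\<Prod>i\<in>PS. emeasure lborel (UNIV :: real set))"
    unfolding space_PiM by (subst emeasure_PiM) (auto simp: finPS)
  moreover have "PS \<noteq> {}" using Ane unfolding PS_def by auto
  ultimately show False using finPS by simp
qed


lemma sumPS: "(\<Sum>x\<in>PS. (\<theta> x)^2) = (\<Sum>i\<in>A. (\<theta> (Inl i))^2) + (\<Sum>j\<in>B-{j0}. (\<theta> (Inr j))^2)"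
proof -
  have "(\<Sum>x\<in>PS. (\<theta> x)^2) = (\<Sum>x\<in>Inl ` A. (\<theta> x)^2) + (\<Sum>x\<in>Inr ` (B-{j0}). (\<theta> x)^2)"
    unfolding PS_def by (rule sum.union_disjoint) (use finA finB in auto)
  also have "\<dots> = (\<Sum>i\<in>A. (\<theta> (Inl i))^2) + (\<Sum>j\<in>B-{j0}. (\<theta> (Inr j))^2)"
    by (simp add: sum.reindex)
  finally show ?thesis .
qed

lemma S_le_q: "(\<Sum>x\<in>PS. (\<theta> x)^2) \<le> (2 * real (card B) + 3) * qf \<theta>"
proof -
  obtain i1 where i1: "i1 \<in> A" using Ane by blast
  have row: "(\<Sum>j\<in>B. (mu \<theta> i j)^2) \<le> qf \<theta>" if "i \<in> A" for i
    unfolding qf_def using that finA by (intro member_le_sum) (auto intro: sum_nonneg)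
  have ent: "(mu \<theta> i j)^2 \<le> qf \<theta>" if "i \<in> A" "j \<in> B" for i j
  proof -
    have "(mu \<theta> i j)^2 \<le> (\<Sum>j\<in>B. (mu \<theta> i j)^2)"
      using that finB by (intro member_le_sum) auto
    thus ?thesis using row[OF that(1)] by linarith
  qed
  have q0: "qf \<theta> \<ge> 0" unfolding qf_def by (intro sum_nonneg) auto
  have a: "(\<Sum>i\<in>A. (\<theta> (Inl i))^2) \<le> qf \<theta>"
  proof -
    have "(\<Sum>i\<in>A. (\<theta> (Inl i))^2) \<le> (\<Sum>i\<in>A. \<Sum>j\<in>B. (mu \<theta> i j)^2)"
    proof (rule sum_mono)
      fix i assume "i \<in> A"
      have "(\<theta> (Inl i))^2 = (mu \<theta> i j0)^2" by (simp add: mu_def)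
      also have "\<dots> \<le> (\<Sum>j\<in>B. (mu \<theta> i j)^2)" using j0 finB by (intro member_le_sum) auto
      finally show "(\<theta> (Inl i))^2 \<le> (\<Sum>j\<in>B. (mu \<theta> i j)^2)" .
    qed
    thus ?thesis by (simp add: qf_def)
  qed
  have b: "(\<Sum>j\<in>B-{j0}. (\<theta> (Inr j))^2) \<le> 2 * qf \<theta> + 2 * real (card B) * qf \<theta>"
  proof -
    have "(\<Sum>j\<in>B-{j0}. (\<theta> (Inr j))^2) \<le> (\<Sum>j\<in>B-{j0}. 2*(mu \<theta> i1 j)^2 + 2*(mu \<theta> i1 j0)^2)"
    proof (rule sum_mono)
      fix j assume j: "j \<in> B - {j0}"
      have "\<theta> (Inr j) = mu \<theta> i1 j - mu \<theta> i1 j0" using j by (simp add: mu_def)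
      moreover have "(x - y)^2 \<le> 2*x^2 + 2*y^2" for x y :: real
        using sum_squares_ge_zero[of "x+y" 0] by (simp add: power2_eq_square algebra_simps)
      ultimately show "(\<theta> (Inr j))^2 \<le> 2*(mu \<theta> i1 j)^2 + 2*(mu \<theta> i1 j0)^2" by simp
    qed
    also have "\<dots> = 2 * (\<Sum>j\<in>B-{j0}. (mu \<theta> i1 j)^2) + real (card (B - {j0})) * (2*(mu \<theta> i1 j0)^2)"
      by (simp add: sum.distrib sum_distrib_left)
    also have "\<dots> \<le> 2 * qf \<theta> + 2 * real (card B) * qf \<theta>"
    proof (rule add_mono)
      have "(\<Sum>j\<in>B-{j0}. (mu \<theta> i1 j)^2) \<le> (\<Sum>j\<in>B. (mu \<theta> i1 j)^2)"
        using finB by (intro sum_mono2) auto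
      thus "2 * (\<Sum>j\<in>B-{j0}. (mu \<theta> i1 j)^2) \<le> 2 * qf \<theta>" using row[OF i1] by linarith
      have c: "real (card (B - {j0})) \<le> real (card B)" using finB by (simp add: card_Diff1_le)
      have "real (card (B - {j0})) * (2*(mu \<theta> i1 j0)^2) \<le> real (card B) * (2 * qf \<theta>)"
        by (rule mult_mono) (use c ent[OF i1 j0] in auto)
      thus "real (card (B - {j0})) * (2*(mu \<theta> i1 j0)^2) \<le> 2 * real (card B) * qf \<theta>" by simp
    qed
    finally show ?thesis .
  qed
  show ?thesis using a b unfolding sumPS by (simp add: algebra_simps)
qed

lemma J_fin: assumes l: "l > 0" shows "J l < \<infinity>"
proof -
  define K where "K = 2 * real (card B) + 3"
  have K: "K > 0" by (simp add: K_def)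
  have "J l \<le> (\<integral>\<^sup>+\<theta>. ennreal (exp (-(l/K) * (\<Sum>x\<in>PS. (\<theta> x)^2))) \<partial>Th)"
    unfolding J_def
  proof (intro nn_integral_mono ennreal_leI)
    fix \<theta> :: "nat+nat \<Rightarrow> real"
    have "(\<Sum>x\<in>PS. (\<theta> x)^2) \<le> K * qf \<theta>" using S_le_q by (simp add: K_def)
    hence "(l/K) * (\<Sum>x\<in>PS. (\<theta> x)^2) \<le> l * qf \<theta>" using K l
      by (simp add: field_simps)
    thus "exp (-l * qf \<theta>) \<le> exp (-(l/K) * (\<Sum>x\<in>PS. (\<theta> x)^2))" by simp
  qed
  also have "\<dots> = ennreal (sqrt (pi/(l/K)) ^ card PS)"
    by (rule gauss_prod[OF finPS]) (use K l in simp)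
  finally show ?thesis by (simp add: top.not_eq_extremum le_less_trans)
qed

lemma amgm_exp: fixes l a b :: real shows "exp (-l*((a+b)/2)) \<le> (exp (-l*a) + exp (-l*b))/2"
proof -
  define x where "x = exp (-l*a/2)"
  define y where "y = exp (-l*b/2)"
  have "exp (-l*a) = x^2" unfolding x_def by (simp add: power2_eq_square exp_add[symmetric])
  moreover have "exp (-l*b) = y^2" unfolding y_def by (simp add: power2_eq_square exp_add[symmetric])
  moreover have "exp (-l*((a+b)/2)) = x*y" unfolding x_def y_def exp_add[symmetric]
    by (rule arg_cong[where f=exp]) (simp add: field_simps)
  moreover have "2*(x*y) \<le> x^2 + y^2" using sum_squares_ge_zero[of "x-y" 0] by (simp add: power2_eq_square algebra_simps)
  ultimately show ?thesis by simp
qed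

lemma fW_shift:
  "fW W (restrict (\<lambda>x. t x + c * u x) PS) = (\<Sum>i\<in>A. \<Sum>j\<in>B. (W (i,j) - mu t i j - c * mu u i j)^2)"
  unfolding fW_def by (intro sum.cong refl) (simp add: mu_restrict algebra_simps)

lemma fW_pm: "fW W (restrict (\<lambda>x. t x + 1 * u x) PS) + fW W (restrict (\<lambda>x. t x + (-1) * u x) PS)
    = 2 * fW W t + 2 * qf u"
proof -
  have e1: "fW W (restrict (\<lambda>x. t x + 1 * u x) PS) = (\<Sum>i\<in>A. \<Sum>j\<in>B. (W (i,j) - mu t i j - 1 * mu u i j)^2)"
    by (rule fW_shift)
  have e2: "fW W (restrict (\<lambda>x. t x + (-1) * u x) PS) = (\<Sum>i\<in>A. \<Sum>j\<in>B. (W (i,j) - mu t i j - (-1) * mu u i j)^2)"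
    by (rule fW_shift)
  show ?thesis unfolding e1 e2 unfolding fW_def qf_def
    by (simp add: sum.distrib[symmetric] sum_distrib_left power2_eq_square algebra_simps)
qed


lemma sym_bound:
  assumes l: "l > 0"
  shows "ennreal (exp (-l * fW W t)) * J l \<le> (\<integral>\<^sup>+\<theta>. ennreal (exp (-l * fW W \<theta>)) \<partial>Th)"
proof -
  define F where "F \<theta> = ennreal (exp (-l * fW W \<theta>))" for \<theta>
  have Fm[measurable]: "F \<in> borel_measurable Th" unfolding F_def
    by (rule measurable_compose[where g=ennreal, OF _ measurable_ennreal],
        rule measurable_compose[where g=exp, OF _ borel_measurable_exp],
        intro borel_measurable_times borel_measurable_const fW_meas)
  have Rc: "(\<lambda>u. restrict (\<lambda>x. t x + c * u x) PS) \<in> measurable Th Th" for c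
  proof (rule measurable_restrict)
    fix x assume "x \<in> PS"
    hence "(\<lambda>u. u x) \<in> borel_measurable Th"
      using measurable_component_singleton[of x PS "\<lambda>_. lborel"] by simp
    thus "(\<lambda>u. t x + c * u x) \<in> measurable Th lborel"
      unfolding measurable_lborel1 by (intro borel_measurable_add borel_measurable_times borel_measurable_const)
  qed
  have Fpm[measurable]: "(\<lambda>u. F (restrict (\<lambda>x. t x + c * u x) PS)) \<in> borel_measurable Th" for c
    by (rule measurable_compose[OF Rc Fm])
  define Fp where "Fp u = F (restrict (\<lambda>x. t x + 1 * u x) PS)" for u
  define Fn where "Fn u = F (restrict (\<lambda>x. t x + (-1) * u x) PS)" for u
  have Fpm'[measurable]: "Fp \<in> borel_measurable Th" "Fn \<in> borel_measurable Th"
    unfolding Fp_def Fn_def by (rule Fpm)+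
  have R1: "(\<integral>\<^sup>+\<theta>. F \<theta> \<partial>Th) = (\<integral>\<^sup>+u. Fp u \<partial>Th)"
    using affine_PiM[OF finPS, of 1 F t] unfolding Fp_def by simp
  have R2: "(\<integral>\<^sup>+\<theta>. F \<theta> \<partial>Th) = (\<integral>\<^sup>+u. Fn u \<partial>Th)"
    using affine_PiM[OF finPS, of "-1" F t] unfolding Fn_def by simp
  have pw: "ennreal (exp (-l * fW W t)) * ennreal (exp (-l * qf u)) \<le> ennreal (1/2) * Fp u + ennreal (1/2) * Fn u" for u
  proof -
    define a where "a = fW W (restrict (\<lambda>x. t x + 1 * u x) PS)"
    define b where "b = fW W (restrict (\<lambda>x. t x + (-1) * u x) PS)"
    have ab: "(a+b)/2 = fW W t + qf u" using fW_pm[of W t u] unfolding a_def b_def by simp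
    have "exp (-l * fW W t) * exp (-l * qf u) = exp (-l*((a+b)/2))"
      unfolding ab by (simp add: exp_add[symmetric] algebra_simps)
    also have "\<dots> \<le> (exp (-l*a) + exp (-l*b))/2" by (rule amgm_exp)
    finally have "ennreal (exp (-l * fW W t) * exp (-l * qf u)) \<le> ennreal ((exp (-l*a) + exp (-l*b))/2)"
      by (rule ennreal_leI)
    also have "\<dots> = ennreal (1/2 * exp (-l*a) + 1/2 * exp (-l*b))"
      by (simp add: add_divide_distrib)
    also have "\<dots> = ennreal (1/2 * exp (-l*a)) + ennreal (1/2 * exp (-l*b))"
      by (rule ennreal_plus) auto
    also have "\<dots> = ennreal (1/2) * ennreal (exp (-l*a)) + ennreal (1/2) * ennreal (exp (-l*b))"
      by (simp only: ennreal_mult[of "1/2"] zero_le_divide_iff zero_le_one zero_le_numeral exp_ge_zero simp_thms)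
    finally show ?thesis unfolding Fp_def Fn_def F_def a_def b_def
      by (simp only: ennreal_mult[of "exp _" "exp _"] exp_ge_zero)
  qed
  have "ennreal (exp (-l * fW W t)) * J l = (\<integral>\<^sup>+u. ennreal (exp (-l * fW W t)) * ennreal (exp (-l * qf u)) \<partial>Th)"
    unfolding J_def by (rule nn_integral_cmult[symmetric]) measurable
  also have "\<dots> \<le> (\<integral>\<^sup>+u. ennreal (1/2) * Fp u + ennreal (1/2) * Fn u \<partial>Th)"
    by (rule nn_integral_mono) (rule pw)
  also have "\<dots> = ennreal (1/2) * (\<integral>\<^sup>+u. Fp u \<partial>Th) + ennreal (1/2) * (\<integral>\<^sup>+u. Fn u \<partial>Th)"
    by (simp add: nn_integral_add nn_integral_cmult)
  also have "\<dots> = (ennreal (1/2) + ennreal (1/2)) * (\<integral>\<^sup>+\<theta>. F \<theta> \<partial>Th)"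
    unfolding R1[symmetric] R2[symmetric] by (simp add: distrib_right)
  also have "\<dots> = (\<integral>\<^sup>+\<theta>. F \<theta> \<partial>Th)"
  proof -
    have "ennreal (1/2) + ennreal (1/2) = ennreal (1/2 + 1/2)" by (rule ennreal_plus[symmetric]) auto
    thus ?thesis by simp
  qed
  finally show ?thesis unfolding F_def .
qed


lemma psf_N: "product_sigma_finite (\<lambda>_::nat\<times>nat. density lborel std_normal_density)"
proof -
  interpret prob_space "density lborel std_normal_density" by (rule prob_space_normal_density) simp
  show ?thesis unfolding product_sigma_finite_def by (simp add: sigma_finite_measure_axioms)
qed

lemma N_one: "(\<integral>\<^sup>+z. 1 \<partial>density lborel std_normal_density) = 1"
proof -
  interpret prob_space "density lborel std_normal_density" by (rule prob_space_normal_density) simp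
  show ?thesis using emeasure_space_1 by simp
qed

lemma powr_half_pow: "s > 0 \<Longrightarrow> (s powr (-1/2)) ^ k = s powr (-(real k)/2)"
  by (simp add: powr_realpow[symmetric] powr_powr)

lemma W_int:
  assumes l: "l > 0"
  shows "(\<integral>\<^sup>+W. ennreal (exp (-l * fW W \<theta>)) \<partial>gauss_matrix n)
     = ennreal ((1+2*l) powr (-(real (card A * card B))/2) * exp (-(l/(1+2*l)) * qf \<theta>))"
proof -
  interpret product_sigma_finite "\<lambda>_::nat\<times>nat. density lborel std_normal_density" by (rule psf_N)
  define I where "I = {1..n} \<times> {1..n}"
  have finI: "finite I" by (simp add: I_def)
  have ABI: "A \<times> B \<subseteq> I" using AB by (auto simp: I_def)
  define s where "s = 1 + 2*l"
  have s: "s > 0" using l by (simp add: s_def)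
  define h where "h x = -l * (snd x - mu \<theta> (fst (fst x)) (snd (fst x)))^2" for x :: "(nat\<times>nat)\<times>real"
  define g where "g x z = (if x \<in> A \<times> B then ennreal (exp (h (x,z))) else 1)" for x z
  have eq: "ennreal (exp (-l * fW W \<theta>)) = (\<Prod>x\<in>I. g x (W x))" for W
  proof -
    have "-l * fW W \<theta> = (\<Sum>x\<in>A\<times>B. h (x, W x))"
      unfolding fW_def h_def by (simp add: sum.cartesian_product sum_distrib_left case_prod_beta)
    hence "exp (-l * fW W \<theta>) = (\<Prod>x\<in>A\<times>B. exp (h (x, W x)))"
      using finA finB by (simp add: exp_sum)
    hence "ennreal (exp (-l * fW W \<theta>)) = (\<Prod>x\<in>A\<times>B. ennreal (exp (h (x, W x))))"
      by (simp add: prod_ennreal)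
    also have "\<dots> = (\<Prod>x\<in>I \<inter> (A\<times>B). ennreal (exp (h (x, W x))))"
      using ABI by (simp add: Int_absorb1)
    also have "\<dots> = (\<Prod>x\<in>I. g x (W x))"
      unfolding g_def by (rule prod.inter_restrict[OF finI])
    finally show ?thesis .
  qed
  have gm: "g x \<in> borel_measurable (density lborel std_normal_density)" for x
    unfolding g_def h_def by (cases "x \<in> A \<times> B") auto
  have gi: "(\<integral>\<^sup>+z. g x z \<partial>density lborel std_normal_density) =
     (if x \<in> A \<times> B then ennreal (s powr (-1/2) * exp (-(l/s) * (mu \<theta> (fst x) (snd x))^2)) else 1)" for x
  proof (cases "x \<in> A \<times> B")
    case True
    have "(\<integral>\<^sup>+z. g x z \<partial>density lborel std_normal_density)
        = (\<integral>\<^sup>+z. ennreal (exp (-l*(z - mu \<theta> (fst x) (snd x))^2)) \<partial>density lborel std_normal_density)"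
      using True unfolding g_def h_def by simp
    also have "\<dots> = ennreal (s powr (-1/2) * exp (-(l/s) * (mu \<theta> (fst x) (snd x))^2))"
      unfolding s_def by (rule gauss1[OF l])
    finally show ?thesis using True by simp
  next
    case False thus ?thesis unfolding g_def using N_one by simp
  qed
  have "(\<integral>\<^sup>+W. ennreal (exp (-l * fW W \<theta>)) \<partial>gauss_matrix n) = (\<integral>\<^sup>+W. (\<Prod>x\<in>I. g x (W x)) \<partial>gauss_matrix n)"
    unfolding eq ..
  also have "\<dots> = (\<Prod>x\<in>I. \<integral>\<^sup>+z. g x z \<partial>density lborel std_normal_density)"
    unfolding gauss_matrix_def I_def[symmetric] by (rule product_nn_integral_prod[OF finI gm])
  also have "\<dots> = (\<Prod>x\<in>I. if x \<in> A \<times> B then ennreal (s powr (-1/2) * exp (-(l/s) * (mu \<theta> (fst x) (snd x))^2)) else 1)"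
    by (simp add: gi)
  also have "\<dots> = (\<Prod>x\<in>I \<inter> (A\<times>B). ennreal (s powr (-1/2) * exp (-(l/s) * (mu \<theta> (fst x) (snd x))^2)))"
    by (rule prod.inter_restrict[OF finI, symmetric])
  also have "\<dots> = (\<Prod>x\<in>A\<times>B. ennreal (s powr (-1/2) * exp (-(l/s) * (mu \<theta> (fst x) (snd x))^2)))"
    using ABI by (simp add: Int_absorb1)
  also have "\<dots> = ennreal (\<Prod>x\<in>A\<times>B. s powr (-1/2) * exp (-(l/s) * (mu \<theta> (fst x) (snd x))^2))"
    by (rule prod_ennreal) simp
  also have "(\<Prod>x\<in>A\<times>B. s powr (-1/2) * exp (-(l/s) * (mu \<theta> (fst x) (snd x))^2))
      = (s powr (-1/2)) ^ card (A\<times>B) * exp (\<Sum>x\<in>A\<times>B. -(l/s) * (mu \<theta> (fst x) (snd x))^2)"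
    using finA finB by (simp add: prod.distrib exp_sum)
  also have "(\<Sum>x\<in>A\<times>B. -(l/s) * (mu \<theta> (fst x) (snd x))^2) = -(l/s) * qf \<theta>"
    unfolding qf_def by (simp add: sum.cartesian_product sum_distrib_left case_prod_beta)
  also have "(s powr (-1/2)) ^ card (A\<times>B) = s powr (-(real (card A * card B))/2)"
    using s powr_half_pow[OF s, of "card A * card B"] by (simp add: card_cartesian_product)
  finally show ?thesis by (simp add: s_def)
qed


lemma qf_scale: "qf (restrict (\<lambda>x. c * \<theta> x) PS) = c^2 * qf \<theta>"
proof -
  have "mu (restrict (\<lambda>x. c * \<theta> x) PS) i j = c * mu \<theta> i j" if "i \<in> A" "j \<in> B" for i j
    using mu_restrict[OF that, of "\<lambda>_. 0" c \<theta>] by (simp add: mu_def)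
  hence "qf (restrict (\<lambda>x. c * \<theta> x) PS) = (\<Sum>i\<in>A. \<Sum>j\<in>B. c^2 * (mu \<theta> i j)^2)"
    unfolding qf_def by (intro sum.cong refl) (simp add: power_mult_distrib)
  thus ?thesis by (simp add: qf_def sum_distrib_left)
qed

lemma J_scale:
  assumes l: "l > 0" and s: "s > 0"
  shows "J (l/s) = ennreal (s powr (real (card PS)/2)) * J l"
proof -
  define F where "F \<theta> = ennreal (exp (-(l/s) * qf \<theta>))" for \<theta>
  have Fm: "F \<in> borel_measurable Th" unfolding F_def
    by (rule measurable_compose[where g=ennreal, OF _ measurable_ennreal],
        rule measurable_compose[where g=exp, OF _ borel_measurable_exp],
        intro borel_measurable_times borel_measurable_const qf_meas)
  have "J (l/s) = (\<integral>\<^sup>+\<theta>. F \<theta> \<partial>Th)" by (simp add: J_def F_def)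
  also have "\<dots> = ennreal (\<bar>sqrt s\<bar> ^ card PS) * (\<integral>\<^sup>+\<theta>. F (restrict (\<lambda>x. (\<lambda>_. 0) x + sqrt s * \<theta> x) PS) \<partial>Th)"
    by (rule affine_PiM[OF finPS _ Fm]) (use s in simp)
  also have "(\<integral>\<^sup>+\<theta>. F (restrict (\<lambda>x. (\<lambda>_. 0) x + sqrt s * \<theta> x) PS) \<partial>Th) = J l"
    unfolding J_def F_def
  proof (intro nn_integral_cong)
    fix \<theta> :: "nat+nat \<Rightarrow> real"
    have "qf (restrict (\<lambda>x. (\<lambda>_. 0) x + sqrt s * \<theta> x) PS) = s * qf \<theta>"
      using qf_scale[of "sqrt s" \<theta>] s by simp
    thus "ennreal (exp (-(l/s) * qf (restrict (\<lambda>x. (\<lambda>_. 0) x + sqrt s * \<theta> x) PS))) = ennreal (exp (-l * qf \<theta>))"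
      using s by simp
  qed
  also have "\<bar>sqrt s\<bar> ^ card PS = s powr (real (card PS)/2)"
    using s by (simp add: powr_realpow[symmetric] powr_powr powr_half_sqrt[symmetric])
  finally show ?thesis .
qed

lemma comp_meas:
  assumes "x \<in> {1..n} \<times> {1..n}"
  shows "(\<lambda>W. W x) \<in> borel_measurable (gauss_matrix n)"
  using measurable_component_singleton[OF assms, of "\<lambda>_. density lborel std_normal_density"]
  unfolding gauss_matrix_def by simp

lemma double_int:
  assumes l: "l > 0"
  shows "(\<integral>\<^sup>+W. (\<integral>\<^sup>+\<theta>. ennreal (exp (-l * fW W \<theta>)) \<partial>Th) \<partial>gauss_matrix n)
    = ennreal ((1+2*l) powr (-(real (card A * card B))/2) * (1+2*l) powr (real (card PS)/2)) * J l"
proof -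
  define s where "s = 1 + 2*l"
  have s: "s > 0" using l by (simp add: s_def)
  interpret G: product_sigma_finite "\<lambda>_::nat\<times>nat. density lborel std_normal_density" by (rule psf_N)
  interpret T: product_sigma_finite "\<lambda>_::nat+nat. lborel :: real measure" by (rule psf_lborel)
  interpret Gs: sigma_finite_measure "gauss_matrix n"
    unfolding gauss_matrix_def by (rule G.sigma_finite) simp
  interpret Ts: sigma_finite_measure Th by (rule T.sigma_finite) (rule finPS)
  interpret P: pair_sigma_finite "gauss_matrix n" Th ..
  have fj: "(\<lambda>p. fW (fst p) (snd p)) \<in> borel_measurable (gauss_matrix n \<Otimes>\<^sub>M Th)"
  proof -
    have "(\<lambda>p. (fst p (i,j) - mu (snd p) i j)^2) \<in> borel_measurable (gauss_matrix n \<Otimes>\<^sub>M Th)"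
      if "i \<in> A" "j \<in> B" for i j
    proof -
      have "(i,j) \<in> {1..n} \<times> {1..n}" using that AB by auto
      hence 1: "(\<lambda>p. fst p (i,j)) \<in> borel_measurable (gauss_matrix n \<Otimes>\<^sub>M Th)"
        by (rule measurable_compose[OF measurable_fst comp_meas])
      have 2: "(\<lambda>p. mu (snd p) i j) \<in> borel_measurable (gauss_matrix n \<Otimes>\<^sub>M Th)"
        by (rule measurable_compose[OF measurable_snd mu_meas[OF that]])
      show ?thesis using 1 2 by (intro borel_measurable_power borel_measurable_diff)
    qed
    thus ?thesis unfolding fW_def by (intro borel_measurable_sum) auto
  qed
  have jm: "case_prod (\<lambda>W \<theta>. ennreal (exp (-l * fW W \<theta>))) \<in> borel_measurable (gauss_matrix n \<Otimes>\<^sub>M Th)"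
    unfolding case_prod_beta
    by (rule measurable_compose[where g=ennreal, OF _ measurable_ennreal],
        rule measurable_compose[where g=exp, OF _ borel_measurable_exp],
        intro borel_measurable_times borel_measurable_const fj)
  have "(\<integral>\<^sup>+W. (\<integral>\<^sup>+\<theta>. ennreal (exp (-l * fW W \<theta>)) \<partial>Th) \<partial>gauss_matrix n)
      = (\<integral>\<^sup>+\<theta>. (\<integral>\<^sup>+W. ennreal (exp (-l * fW W \<theta>)) \<partial>gauss_matrix n) \<partial>Th)"
    by (rule P.Fubini'[OF jm, symmetric])
  also have "\<dots> = (\<integral>\<^sup>+\<theta>. ennreal (s powr (-(real (card A * card B))/2)) * ennreal (exp (-(l/s) * qf \<theta>)) \<partial>Th)"
    by (intro nn_integral_cong, unfold W_int[OF l] s_def) (simp add: ennreal_mult)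
  also have "\<dots> = ennreal (s powr (-(real (card A * card B))/2)) * J (l/s)"
    unfolding J_def by (rule nn_integral_cmult) (rule measurable_compose[where g=ennreal, OF _ measurable_ennreal],
        rule measurable_compose[where g=exp, OF _ borel_measurable_exp],
        intro borel_measurable_times borel_measurable_const qf_meas)
  also have "\<dots> = ennreal (s powr (-(real (card A * card B))/2)) * (ennreal (s powr (real (card PS)/2)) * J l)"
    by (simp add: J_scale[OF l s])
  finally show ?thesis by (simp add: s_def ennreal_mult mult.assoc)
qed


definition th0 :: "(nat \<Rightarrow> real) \<Rightarrow> (nat \<Rightarrow> real) \<Rightarrow> real \<Rightarrow> (nat + nat \<Rightarrow> real)" where
  "th0 a b c = (\<lambda>x. case x of Inl i \<Rightarrow> a i + c + b j0 | Inr j \<Rightarrow> b j - b j0)"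

lemma fW_th0: "fW W (th0 a b c) = (\<Sum>i\<in>A. \<Sum>j\<in>B. (W (i,j) - a i - b j - c)^2)"
  unfolding fW_def by (intro sum.cong refl) (simp add: mu_def th0_def algebra_simps)

lemma rss_meas: "(\<lambda>W. rss W A B) \<in> borel_measurable (gauss_matrix n)"
  unfolding rss_def resid_def rowm_def colm_def totm_def
  by (intro borel_measurable_sum borel_measurable_power borel_measurable_add borel_measurable_diff
      borel_measurable_divide borel_measurable_const comp_meas; use AB in auto)

lemma prob_bound:
  assumes kA: "card A \<ge> 2" and kB: "card B \<ge> 2" and t0: "0 < \<tau>" and t1: "\<tau> < 1"
  shows "measure (gauss_matrix n) {W \<in> space (gauss_matrix n). G_sub W A B \<le> \<tau>}
     \<le> exp (-((\<tau> - 1 - ln \<tau>)/2) * ((real (card A) - 1) * (real (card B) - 1)))"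
proof -
  interpret G: product_sigma_finite "\<lambda>_::nat\<times>nat. density lborel std_normal_density" by (rule psf_N)
  interpret Gp: prob_space "gauss_matrix n" unfolding gauss_matrix_def
    by (rule prob_space_PiM) (rule prob_space_normal_density, simp)
  define m where "m = (real (card A) - 1) * (real (card B) - 1)"
  have m: "m > 0" using kA kB by (simp add: m_def)
  define E where "E = {W \<in> space (gauss_matrix n). rss W A B \<le> \<tau> * m}"
  have Eeq: "{W \<in> space (gauss_matrix n). G_sub W A B \<le> \<tau>} = E"
    unfolding E_def G_sub_rss[OF finB kB finA kA] m_def[symmetric] using m
    by (auto simp: divide_le_eq mult.commute)
  have Em: "E \<in> sets (gauss_matrix n)" unfolding E_def using rss_meas by measurable
  define l where "l = (1/\<tau> - 1)/2"
  have l: "l > 0" using t0 t1 by (simp add: l_def field_simps)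
  define s where "s = 1 + 2*l"
  have s_eq: "s = 1/\<tau>" using t0 by (simp add: s_def l_def field_simps)
  have s: "s > 0" using t0 by (simp add: s_eq)
  have pw: "indicator E W * ennreal (exp (-l * (\<tau> * m))) * J l \<le> (\<integral>\<^sup>+\<theta>. ennreal (exp (-l * fW W \<theta>)) \<partial>Th)" for W
  proof (cases "W \<in> E")
    case True
    define t where "t = th0 (rowm W A B) (colm W A B) (- totm W A B)"
    have "fW W t = rss W A B" unfolding t_def fW_th0 rss_eq ..
    hence "fW W t \<le> \<tau> * m" using True by (simp add: E_def)
    hence "exp (-l * (\<tau> * m)) \<le> exp (-l * fW W t)" using l by simp
    hence "ennreal (exp (-l * (\<tau> * m))) * J l \<le> ennreal (exp (-l * fW W t)) * J l"
      by (intro mult_right_mono ennreal_leI) auto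
    also have "\<dots> \<le> (\<integral>\<^sup>+\<theta>. ennreal (exp (-l * fW W \<theta>)) \<partial>Th)" by (rule sym_bound[OF l])
    finally show ?thesis using True by simp
  qed simp
  have "emeasure (gauss_matrix n) E * (ennreal (exp (-l * (\<tau> * m))) * J l)
      = (\<integral>\<^sup>+W. indicator E W * (ennreal (exp (-l * (\<tau> * m))) * J l) \<partial>gauss_matrix n)"
    using Em by (simp add: nn_integral_multc)
  also have "\<dots> \<le> (\<integral>\<^sup>+W. (\<integral>\<^sup>+\<theta>. ennreal (exp (-l * fW W \<theta>)) \<partial>Th) \<partial>gauss_matrix n)"
    by (rule nn_integral_mono) (use pw in \<open>simp add: mult.assoc\<close>)
  also have "\<dots> = ennreal (s powr (-(real (card A * card B))/2) * s powr (real (card PS)/2)) * J l"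
    unfolding s_def by (rule double_int[OF l])
  finally have ineq: "emeasure (gauss_matrix n) E * (ennreal (exp (-l * (\<tau> * m))) * J l)
      \<le> ennreal (s powr (-(real (card A * card B))/2) * s powr (real (card PS)/2)) * J l" .
  obtain j where j: "J l = ennreal j" "j > 0"
    using J_pos[of l] J_fin[OF l] by (cases "J l") (auto simp: ennreal_less_zero_iff)
  define P where "P = measure (gauss_matrix n) E"
  have P0: "P \<ge> 0" by (simp add: P_def)
  have "ennreal (P * exp (-l * (\<tau> * m)) * j) \<le> ennreal (s powr (-(real (card A * card B))/2) * s powr (real (card PS)/2) * j)"
    using ineq unfolding j(1) Gp.emeasure_eq_measure P_def[symmetric]
    using P0 j(2) by (simp add: ennreal_mult[symmetric] mult.assoc)
  hence "P * exp (-l * (\<tau> * m)) * j \<le> s powr (-(real (card A * card B))/2) * s powr (real (card PS)/2) * j"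
    using s j(2) by (subst (asm) ennreal_le_iff) auto
  hence "P * exp (-l * (\<tau> * m)) \<le> s powr (-(real (card A * card B))/2) * s powr (real (card PS)/2)"
    using j(2) by simp
  hence Pb: "P \<le> s powr (-(real (card A * card B))/2) * s powr (real (card PS)/2) * exp (l * (\<tau> * m))"
    by (simp add: exp_minus field_simps)
  have cPS: "real (card PS) = real (card A) + real (card B) - 1"
    using cardPS kA by simp
  have "s powr (-(real (card A * card B))/2) * s powr (real (card PS)/2) = s powr (-m/2)"
    unfolding powr_add[symmetric] cPS m_def by (rule arg_cong[where f="(powr) s"]) (simp add: field_simps)
  also have "\<dots> = exp (ln \<tau> * m/2)"
    unfolding s_eq using t0 by (simp add: powr_def ln_div)
  finally have "P \<le> exp (ln \<tau> * m/2) * exp (l * (\<tau> * m))" using Pb by simp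
  also have "\<dots> = exp (-((\<tau> - 1 - ln \<tau>)/2) * m)"
    unfolding exp_add[symmetric] l_def using t0 by (simp add: field_simps)
  finally show ?thesis unfolding Eeq P_def m_def .
qed


lemma event_meas:
  assumes kA: "card A \<ge> 2" and kB: "card B \<ge> 2"
  shows "{W \<in> space (gauss_matrix n). G_sub W A B \<le> \<tau>} \<in> sets (gauss_matrix n)"
  unfolding G_sub_rss[OF finB kB finA kA] using rss_meas by measurable

end


lemma prob_bound_k:
  assumes AB: "A \<subseteq> {1..n}" "B \<subseteq> {1..n}" and c: "card A = k" "card B = k" "k \<ge> 2"
    and t: "0 < \<tau>" "\<tau> < 1"
  shows "{W \<in> space (gauss_matrix n). G_sub W A B \<le> \<tau>} \<in> sets (gauss_matrix n) \<and>
    measure (gauss_matrix n) {W \<in> space (gauss_matrix n). G_sub W A B \<le> \<tau>}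
      \<le> exp (-((\<tau> - 1 - ln \<tau>)/2) * (real k - 1)^2)"
proof -
  have "B \<noteq> {}" "A \<noteq> {}" using c by auto
  then obtain j0 where j0: "j0 \<in> B" by blast
  interpret twoway n A B j0 using AB j0 \<open>A \<noteq> {}\<close> by unfold_locales auto
  show ?thesis
    using event_meas[of \<tau>] prob_bound[of \<tau>] c t by (simp add: power2_eq_square)
qed

lemma ln_lt_minus_one: fixes x :: real assumes "x > 0" "x \<noteq> 1" shows "ln x < x - 1"
proof -
  have sx: "sqrt x > 0" using assms by simp
  have "ln x = 2 * ln (sqrt x)" using assms by (simp add: ln_sqrt)
  also have "\<dots> \<le> 2 * (sqrt x - 1)" using ln_le_minus_one[OF sx] by simp
  also have "\<dots> < x - 1"
  proof -
    have "sqrt x \<noteq> 1" using assms by simp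
    hence "(sqrt x - 1)^2 > 0" by simp
    thus ?thesis using assms by (simp add: power2_eq_square algebra_simps)
  qed
  finally show ?thesis .
qed

lemma h_pos: assumes "0 < \<tau>" "\<tau> < 1" shows "h_fun \<tau> > 0"
  using ln_lt_minus_one[of "2 - \<tau>"] assms by (simp add: h_fun_def)

lemma h_lt1: assumes "0 < \<tau>" "\<tau> < 1" shows "h_fun \<tau> < 1"
proof -
  have "ln (2 - \<tau>) > 0" using assms by (intro ln_gt_zero) simp
  thus ?thesis using assms unfolding h_fun_def by linarith
qed

lemma g_gt_h: assumes t0: "0 < \<tau>" and t1: "\<tau> < 1" shows "\<tau> - 1 - ln \<tau> > h_fun \<tau>"
proof -
  define u where "u x = 2*x - 2 - ln x + ln (2 - x)" for x :: real
  have d: "DERIV u x :> 2 - 1/x - 1/(2-x)" if "0 < x" "x < 2" for x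
    unfolding u_def using that by (auto intro!: derivative_eq_intros simp: field_simps)
  have "u 1 < u \<tau>"
  proof (rule DERIV_neg_imp_decreasing_open[OF t1])
    fix x assume x: "\<tau> < x" "x < 1"
    have "(x-1)^2 > 0" using x by simp
    hence "x * (2 - x) < 1" by (simp add: power2_eq_square algebra_simps)
    hence "1/x + 1/(2-x) > 2" using x t0 by (simp add: field_simps)
    thus "\<exists>y. DERIV u x :> y \<and> y < 0" using d[of x] x t0 by (intro exI[of _ "2 - 1/x - 1/(2-x)"]) auto
  next
    show "continuous_on {\<tau>..1} u"
    proof (intro continuous_at_imp_continuous_on ballI)
      fix x assume "x \<in> {\<tau>..1}"
      hence "0 < x" "x < 2" using t0 by auto
      thus "isCont u x" using d by (blast intro: DERIV_isCont)
    qed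
  qed
  moreover have "u 1 = 0" by (simp add: u_def)
  ultimately show ?thesis by (simp add: u_def h_fun_def)
qed


lemma key_ineq:
  fixes L H g \<gamma> t k r :: real
  assumes L: "L \<ge> 1" and H: "H \<ge> 4" and gpos: "g > 0" and gH: "g * H = 2*\<gamma>"
    and tlow: "t - 1 \<ge> H * (L - ln (H*L))"
    and c2: "ln (H*L) \<le> L/2"
    and c3: "(\<gamma>-1)*L - \<gamma> * ln (H*L) \<ge> 1"
    and r: "r \<ge> 0" and k: "k \<ge> t + r"
  shows "2*k*L + (2*r+1)*L \<le> g*(k-1)^2"
proof -
  define vv where "vv = H*(L - ln (H*L))"
  have Lh: "L - ln (H*L) \<ge> L/2" using c2 by simp
  have "vv \<ge> 4 * (L/2)" unfolding vv_def by (rule mult_mono) (use H Lh L in auto)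
  hence v2L: "vv \<ge> 2*L" by simp
  have gv: "g* vv = 2*\<gamma>*(L - ln (H*L))" unfolding vv_def using gH by (metis mult.assoc)
  have gv2: "g* vv - 2*L \<ge> 2" unfolding gv using c3 by (simp add: algebra_simps)
  define uu where "uu = t - 1"
  have uv: "uu \<ge> vv" using tlow by (simp add: uu_def vv_def)
  have u0: "uu \<ge> 0" using uv v2L L by simp
  have gu: "g* uu \<ge> g* vv" using uv gpos by simp
  have p1: "uu*(g* uu - 2*L) \<ge> uu*2" by (rule mult_left_mono) (use gu gv2 u0 in auto)
  have phit: "g*(t-1)^2 - 2*t*L - L \<ge> 0"
  proof -
    have "g*(t-1)^2 - 2*t*L - L = uu*(g* uu - 2*L) - 3*L" by (simp add: uu_def power2_eq_square algebra_simps)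
    also have "\<dots> \<ge> uu*2 - 3*L" using p1 by simp
    finally show ?thesis using uv v2L L by linarith
  qed
  have kt: "k - t \<ge> 0" using k r by simp
  have second: "g*(k+t-2) - 4*L \<ge> 0"
  proof -
    have "k + t - 2 \<ge> 2* uu" using kt by (simp add: uu_def)
    hence "g*(k+t-2) \<ge> g*(2* uu)" using gpos by simp
    moreover have "g*(2* uu) \<ge> 2*(2*L+2)" using gu gv2 by simp
    ultimately show ?thesis by simp
  qed
  have phik: "g*(k-1)^2 - 4*k*L + 2*t*L - L = (g*(t-1)^2 - 2*t*L - L) + (k-t)*(g*(k+t-2) - 4*L)"
    by (simp add: power2_eq_square algebra_simps)
  have "(k-t)*(g*(k+t-2) - 4*L) \<ge> 0" using kt second by simp
  hence ph: "g*(k-1)^2 - 4*k*L + 2*t*L - L \<ge> 0" using phik phit by linarith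
  have "(2*r+1)*L \<le> (2*(k-t)+1)*L" by (rule mult_right_mono) (use k L in auto)
  thus ?thesis using ph by (simp add: algebra_simps)
qed


lemma eventually_conds:
  fixes H \<gamma> :: real assumes H: "H \<ge> 4" and \<gamma>: "\<gamma> > 1"
  shows "\<forall>\<^sub>F n in sequentially. ln (real n) \<ge> 1 \<and> ln (H * ln (real n)) \<le> ln (real n)/2 \<and>
            (\<gamma>-1)*ln (real n) - \<gamma>*ln (H * ln (real n)) \<ge> 1"
proof -
  define \<delta> where "\<delta> = min (1/4) ((\<gamma>-1)/(4*\<gamma>))"
  have \<delta>: "\<delta> > 0" using \<gamma> by (simp add: \<delta>_def)
  define L0 where "L0 = max 1 (max (\<bar>ln H\<bar>/\<delta>) (2/(\<gamma>-1)))"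
  have ev1: "\<forall>\<^sub>F L in at_top. ln L / L < \<delta>"
    using order_tendstoD(2)[OF ln_x_over_x_tendsto_0 \<delta>] .
  have ev2: "\<forall>\<^sub>F L in at_top. L \<ge> L0" by (rule eventually_ge_at_top)
  have "\<forall>\<^sub>F L in at_top. L \<ge> 1 \<and> ln (H * L) \<le> L/2 \<and> (\<gamma>-1)*L - \<gamma>*ln (H * L) \<ge> 1"
    using ev1 ev2
  proof eventually_elim
    case (elim L)
    have L1: "L \<ge> 1" using elim by (simp add: L0_def)
    have lnL: "ln L < \<delta> * L" using elim L1 by (simp add: divide_less_eq)
    have "\<bar>ln H\<bar>/\<delta> \<le> L" using elim by (simp add: L0_def)
    hence lnH: "\<bar>ln H\<bar> \<le> \<delta> * L" using \<delta> by (simp add: divide_le_eq mult.commute)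
    have lnHL: "ln (H*L) \<le> 2*\<delta>*L" using H L1 lnL lnH by (simp add: ln_mult)
    have d1: "\<delta> \<le> 1/4" and d2: "\<delta> \<le> (\<gamma>-1)/(4*\<gamma>)" by (simp_all add: \<delta>_def)
    have "2*\<delta>*L \<le> 2*(1/4)*L" using d1 L1 by (intro mult_right_mono) auto
    hence c2: "ln (H*L) \<le> L/2" using lnHL by simp
    have "\<gamma>*(2*\<delta>*L) \<le> \<gamma>*(2*((\<gamma>-1)/(4*\<gamma>))*L)" using d2 L1 \<gamma> by (intro mult_left_mono mult_right_mono) auto
    also have "\<dots> = (\<gamma>-1)*L/2" using \<gamma> by (simp add: field_simps)
    finally have a: "\<gamma>*(2*\<delta>*L) \<le> (\<gamma>-1)*L/2" .
    have "\<gamma>*ln (H*L) \<le> \<gamma>*(2*\<delta>*L)" using lnHL \<gamma> by simp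
    moreover have "2/(\<gamma>-1) \<le> L" using elim by (simp add: L0_def)
    hence "(\<gamma>-1)*L/2 \<ge> 1" using \<gamma> by (simp add: field_simps)
    ultimately have c3: "(\<gamma>-1)*L - \<gamma>*ln (H * L) \<ge> 1" using a by linarith
    show ?case using L1 c2 c3 by simp
  qed
  thus ?thesis
    by (rule eventually_compose_filterlim) (rule filterlim_compose[OF ln_at_top filterlim_real_sequentially])
qed


lemma Ltau_ge:
  assumes y: "y > 0"
  shows "real (L_tau \<tau> n W) \<ge> y \<longleftrightarrow> (\<exists>k\<in>{k. 2 \<le> k \<and> k \<le> n \<and> y \<le> real k}.
     \<exists>p\<in>{A. A \<subseteq> {1..n} \<and> card A = k} \<times> {A. A \<subseteq> {1..n} \<and> card A = k}. G_sub W (fst p) (snd p) \<le> \<tau>)"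
proof -
  define S where "S = {k. \<exists>A B. A \<subseteq> {1..n} \<and> B \<subseteq> {1..n} \<and> card A = k \<and> card B = k
        \<and> k \<ge> 2 \<and> G_sub W A B \<le> \<tau>}"
  have Sle: "k \<le> n" if kS: "k \<in> S" for k
  proof -
    from kS obtain A where A: "A \<subseteq> {1..n}" "card A = k" unfolding S_def by blast
    have "card A \<le> card {1..n}" using A(1) by (rule card_mono[rotated]) simp
    thus ?thesis using A(2) by simp
  qed
  have sub: "S \<union> {0} \<subseteq> {..n}" using Sle by auto
  have fin: "finite (S \<union> {0})" by (rule finite_subset[OF sub]) simp
  have L: "L_tau \<tau> n W = Max (S \<union> {0})" unfolding L_tau_def S_def ..
  define R where "R = (\<exists>k\<in>{k. 2 \<le> k \<and> k \<le> n \<and> y \<le> real k}.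
     \<exists>p\<in>{A. A \<subseteq> {1..n} \<and> card A = k} \<times> {A. A \<subseteq> {1..n} \<and> card A = k}. G_sub W (fst p) (snd p) \<le> \<tau>)"
  have fwd: "R" if ge: "real (L_tau \<tau> n W) \<ge> y"
  proof -
    have "Max (S \<union> {0}) \<in> S \<union> {0}" using fin by (rule Max_in) simp
    moreover have "Max (S \<union> {0}) \<noteq> 0" using ge y unfolding L by auto
    ultimately have inS: "L_tau \<tau> n W \<in> S" unfolding L by blast
    then obtain A B where AB: "A \<subseteq> {1..n}" "B \<subseteq> {1..n}" "card A = L_tau \<tau> n W" "card B = L_tau \<tau> n W"
        "L_tau \<tau> n W \<ge> 2" "G_sub W A B \<le> \<tau>" unfolding S_def by blast
    have kK: "L_tau \<tau> n W \<in> {k. 2 \<le> k \<and> k \<le> n \<and> y \<le> real k}" using AB(5) Sle[OF inS] ge by simp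
    have pP: "(A,B) \<in> {A. A \<subseteq> {1..n} \<and> card A = L_tau \<tau> n W} \<times> {A. A \<subseteq> {1..n} \<and> card A = L_tau \<tau> n W}"
      using AB by simp
    show ?thesis unfolding R_def
      by (rule bexI[OF _ kK], rule bexI[OF _ pP]) (simp add: AB(6))
  qed
  have bwd: "real (L_tau \<tau> n W) \<ge> y" if R
  proof -
    obtain k p where k: "k \<in> {k. 2 \<le> k \<and> k \<le> n \<and> y \<le> real k}"
      and p: "p \<in> {A. A \<subseteq> {1..n} \<and> card A = k} \<times> {A. A \<subseteq> {1..n} \<and> card A = k}"
      and G: "G_sub W (fst p) (snd p) \<le> \<tau>" using \<open>R\<close> unfolding R_def by blast
    have "fst p \<subseteq> {1..n}" "snd p \<subseteq> {1..n}" "card (fst p) = k" "card (snd p) = k" using p by auto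
    hence "k \<in> S" unfolding S_def using k G by blast
    hence "k \<le> Max (S \<union> {0})" using fin by (intro Max_ge) auto
    thus ?thesis using k unfolding L by simp
  qed
  show ?thesis using fwd bwd unfolding R_def by blast
qed


lemma card_Sk: "card {A. A \<subseteq> {1..n} \<and> card A = k} = n choose k"
  using n_subsets[of "{1..n}" k] by simp

lemma per_k_bound:
  fixes n k r :: nat and g L H \<gamma> t :: real
  assumes n: "real n = exp L" and L: "L \<ge> 1" and H: "H \<ge> 4" and gpos: "g > 0" and gH: "g * H = 2*\<gamma>"
    and tlow: "t - 1 \<ge> H * (L - ln (H*L))" and c2: "ln (H*L) \<le> L/2"
    and c3: "(\<gamma>-1)*L - \<gamma> * ln (H*L) \<ge> 1" and k: "real k \<ge> t + real r" and kn: "k \<le> n"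
  shows "real ((n choose k) * (n choose k)) * exp (-g * (real k - 1)^2) \<le> real n powr (-(2*real r + 1))"
proof -
  have npos: "real n > 0" using n by simp
  have "real (n choose k) \<le> real n ^ k" using binomial_le_pow[OF kn] by (metis of_nat_le_iff of_nat_power)
  hence "real ((n choose k) * (n choose k)) \<le> real n ^ k * real n ^ k"
    by (simp add: mult_mono)
  also have "\<dots> = exp L ^ (k + k)" unfolding n by (rule power_add[symmetric])
  also have "\<dots> = exp (real (k + k) * L)" by (rule exp_of_nat_mult[symmetric])
  also have "\<dots> = exp (2 * real k * L)" by simp
  finally have b: "real ((n choose k) * (n choose k)) \<le> exp (2 * real k * L)" .
  have ki: "2*real k*L + (2*real r+1)*L \<le> g*(real k-1)^2"
    by (rule key_ineq[OF L H gpos gH tlow c2 c3 _ k]) simp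
  have "real ((n choose k) * (n choose k)) * exp (-g * (real k - 1)^2) \<le> exp (2 * real k * L) * exp (-g * (real k - 1)^2)"
    by (rule mult_right_mono[OF b]) simp
  also have "\<dots> = exp (2 * real k * L - g * (real k - 1)^2)" by (simp add: exp_add[symmetric])
  also have "\<dots> \<le> exp (-(2*real r + 1) * L)" using ki by (simp add: algebra_simps)
  also have "\<dots> = real n powr (-(2*real r + 1))" using npos n by (simp add: powr_def)
  finally show ?thesis .
qed

theorem proposition2:
  fixes \<tau> :: real
  assumes "0 < \<tau>" and "\<tau> < 1"
  shows "\<forall>\<epsilon>>0. \<forall>\<^sub>F n in sequentially. \<forall>r\<in>{1..n}.
     {W \<in> space (gauss_matrix n). real (L_tau \<tau> n W) \<ge> t_fun n \<tau> + real r} \<in> sets (gauss_matrix n) \<and>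
     measure (gauss_matrix n) {W \<in> space (gauss_matrix n). real (L_tau \<tau> n W) \<ge> t_fun n \<tau> + real r}
       \<le> 4 / h_fun \<tau> * (ln (real n) / h_fun \<tau>) powr (2 * real r + 2 + \<epsilon>) * real n powr (- 2 * real r)"
proof (intro allI impI)
  fix \<epsilon> :: real assume \<epsilon>: "\<epsilon> > 0"
  note t0 = assms(1) and t1 = assms(2)
  define h where "h = h_fun \<tau>"
  have h0: "h > 0" and h1: "h < 1" using h_pos[OF t0 t1] h_lt1[OF t0 t1] by (simp_all add: h_def)
  define H where "H = 4/h"
  have H4: "H \<ge> 4" using h0 h1 by (simp add: H_def field_simps)
  define g where "g = (\<tau> - 1 - ln \<tau>)/2"
  define \<gamma> where "\<gamma> = (\<tau> - 1 - ln \<tau>)/h"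
  have gh: "\<tau> - 1 - ln \<tau> > h" using g_gt_h[OF t0 t1] by (simp add: h_def)
  have \<gamma>1: "\<gamma> > 1" using gh h0 by (simp add: \<gamma>_def field_simps)
  have gpos: "g > 0" using gh h0 by (simp add: g_def)
  have gH: "g * H = 2 * \<gamma>" using h0 by (simp add: g_def H_def \<gamma>_def field_simps)
  show "\<forall>\<^sub>F n in sequentially. \<forall>r\<in>{1..n}.
     {W \<in> space (gauss_matrix n). real (L_tau \<tau> n W) \<ge> t_fun n \<tau> + real r} \<in> sets (gauss_matrix n) \<and>
     measure (gauss_matrix n) {W \<in> space (gauss_matrix n). real (L_tau \<tau> n W) \<ge> t_fun n \<tau> + real r}
       \<le> 4 / h_fun \<tau> * (ln (real n) / h_fun \<tau>) powr (2 * real r + 2 + \<epsilon>) * real n powr (- 2 * real r)"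
    using eventually_conds[OF H4 \<gamma>1]
  proof eventually_elim
    case (elim n)
    define L where "L = ln (real n)"
    have L1: "L \<ge> 1" and c2: "ln (H*L) \<le> L/2" and c3: "(\<gamma>-1)*L - \<gamma> * ln (H*L) \<ge> 1"
      using elim by (simp_all add: L_def)
    have npos: "real n > 0" using L1 by (cases "n = 0") (auto simp: L_def)
    have nL: "real n = exp L" using npos by (simp add: L_def)
    show ?case
    proof
      fix r assume r: "r \<in> {1..n}"
      define t where "t = t_fun n \<tau>"
      have t_eq: "t = H*L - H*ln (H*L) + H + 2" unfolding t_def t_fun_def H_def h_def L_def ..
      have tlow: "t - 1 \<ge> H*(L - ln (H*L))" using t_eq H4 by (simp add: algebra_simps)
      have "H*(L - ln (H*L)) \<ge> 4*(L/2)" by (rule mult_mono) (use H4 c2 L1 in auto)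
      hence tpos: "t > 0" using tlow L1 by simp
      define y where "y = t + real r"
      have y0: "y > 0" using tpos by (simp add: y_def)
      define K where "K = {k. 2 \<le> k \<and> k \<le> n \<and> y \<le> real k}"
      define Sk where "Sk k = {A. A \<subseteq> {1..n} \<and> card A = k}" for k
      define E where "E p = {W \<in> space (gauss_matrix n). G_sub W (fst p) (snd p) \<le> \<tau>}" for p
      have set_eq: "{W \<in> space (gauss_matrix n). real (L_tau \<tau> n W) \<ge> t_fun n \<tau> + real r} = (\<Union>k\<in>K. \<Union>p\<in>Sk k \<times> Sk k. E p)"
      proof (intro set_eqI iffI)
        fix W assume "W \<in> {W \<in> space (gauss_matrix n). real (L_tau \<tau> n W) \<ge> t_fun n \<tau> + real r}"
        hence W: "W \<in> space (gauss_matrix n)" "real (L_tau \<tau> n W) \<ge> y" by (auto simp: y_def t_def)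
        from W(2)[unfolded Ltau_ge[OF y0]] obtain k p where "k \<in> K" "p \<in> Sk k \<times> Sk k" "G_sub W (fst p) (snd p) \<le> \<tau>"
          unfolding K_def Sk_def by blast
        thus "W \<in> (\<Union>k\<in>K. \<Union>p\<in>Sk k \<times> Sk k. E p)" using W(1) unfolding E_def by blast
      next
        fix W assume "W \<in> (\<Union>k\<in>K. \<Union>p\<in>Sk k \<times> Sk k. E p)"
        then obtain k p where kp: "k \<in> K" "p \<in> Sk k \<times> Sk k" and W: "W \<in> space (gauss_matrix n)" "G_sub W (fst p) (snd p) \<le> \<tau>"
          unfolding E_def by blast
        have "real (L_tau \<tau> n W) \<ge> y" unfolding Ltau_ge[OF y0] using kp W(2) unfolding K_def Sk_def by blast
        thus "W \<in> {W \<in> space (gauss_matrix n). real (L_tau \<tau> n W) \<ge> t_fun n \<tau> + real r}"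
          using W(1) by (simp add: y_def t_def)
      qed
      have finK: "finite K" by (rule finite_subset[of _ "{..n}"]) (auto simp: K_def)
      have finS: "finite (Sk k \<times> Sk k)" for k
      proof -
        have "Sk k \<subseteq> Pow {1..n}" by (auto simp: Sk_def)
        hence "finite (Sk k)" by (rule finite_subset) simp
        thus ?thesis by simp
      qed
      have Ep: "E p \<in> sets (gauss_matrix n) \<and> measure (gauss_matrix n) (E p) \<le> exp (-g * (real k - 1)^2)"
        if "k \<in> K" "p \<in> Sk k \<times> Sk k" for k p
      proof -
        have "fst p \<subseteq> {1..n}" "snd p \<subseteq> {1..n}" "card (fst p) = k" "card (snd p) = k" "k \<ge> 2"
          using that by (auto simp: K_def Sk_def)
        from prob_bound_k[OF this t0 t1] show ?thesis unfolding E_def g_def by simp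
      qed
      have Um: "(\<Union>p\<in>Sk k \<times> Sk k. E p) \<in> sets (gauss_matrix n)" if "k \<in> K" for k
        using Ep[OF that] finS[of k] by (intro sets.finite_UN) auto
      have meas: "(\<Union>k\<in>K. \<Union>p\<in>Sk k \<times> Sk k. E p) \<in> sets (gauss_matrix n)"
        by (rule sets.finite_UN[OF finK Um])
      have Ub: "measure (gauss_matrix n) (\<Union>p\<in>Sk k \<times> Sk k. E p) \<le> real n powr (-(2*real r + 1))"
        if kK: "k \<in> K" for k
      proof -
        have "measure (gauss_matrix n) (\<Union>p\<in>Sk k \<times> Sk k. E p) \<le> (\<Sum>p\<in>Sk k \<times> Sk k. measure (gauss_matrix n) (E p))"
          using Ep[OF kK] by (intro measure_UNION_le[OF finS]) auto
        also have "\<dots> \<le> (\<Sum>p\<in>Sk k \<times> Sk k. exp (-g * (real k - 1)^2))"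
          using Ep[OF kK] by (intro sum_mono) auto
        also have "\<dots> = real ((n choose k) * (n choose k)) * exp (-g * (real k - 1)^2)"
          unfolding sum_constant Sk_def card_cartesian_product card_Sk by simp
        also have "\<dots> \<le> real n powr (-(2*real r + 1))"
          using kK by (intro per_k_bound[OF nL L1 H4 gpos gH tlow c2 c3]) (auto simp: K_def y_def)
        finally show ?thesis .
      qed
      have "measure (gauss_matrix n) (\<Union>k\<in>K. \<Union>p\<in>Sk k \<times> Sk k. E p)
          \<le> (\<Sum>k\<in>K. measure (gauss_matrix n) (\<Union>p\<in>Sk k \<times> Sk k. E p))"
        using Um by (intro measure_UNION_le[OF finK]) auto
      also have "\<dots> \<le> (\<Sum>k\<in>K. real n powr (-(2*real r + 1)))"
        using Ub by (intro sum_mono) auto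
      also have "\<dots> = real (card K) * real n powr (-(2*real r + 1))" by simp
      also have "\<dots> \<le> real n * real n powr (-(2*real r + 1))"
      proof (rule mult_right_mono)
        have "K \<subseteq> {1..n}" by (auto simp: K_def)
        hence "card K \<le> card {1..n}" by (rule card_mono[rotated]) simp
        thus "real (card K) \<le> real n" by simp
      qed simp
      also have "\<dots> = real n powr (1 + -(2*real r + 1))"
      proof -
        have e: "real n powr (1 + -(2*real r + 1)) = real n powr 1 * real n powr (-(2*real r + 1))"
          by (rule powr_add)
        have e1: "real n powr 1 = real n" using npos by simp
        show ?thesis unfolding e e1 ..
      qed
      also have "\<dots> = real n powr (- 2 * real r)"
        by (rule arg_cong[where f="(powr) (real n)"]) simp
      also have "\<dots> \<le> 4 / h_fun \<tau> * (ln (real n) / h_fun \<tau>) powr (2 * real r + 2 + \<epsilon>) * real n powr (- 2 * real r)"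
      proof -
        have a: "4 / h \<ge> 1" using h0 h1 by (simp add: field_simps)
        have "L / h \<ge> 1" using L1 h0 h1 by (simp add: field_simps)
        hence b: "(L / h) powr (2 * real r + 2 + \<epsilon>) \<ge> 1" using \<epsilon> by (intro ge_one_powr_ge_zero) auto
        have "1 \<le> 4 / h * (L / h) powr (2 * real r + 2 + \<epsilon>)"
          using mult_mono[OF a b] h0 by simp
        hence "1 * real n powr (- 2 * real r) \<le> 4 / h * (L / h) powr (2 * real r + 2 + \<epsilon>) * real n powr (- 2 * real r)"
          by (intro mult_right_mono) auto
        thus ?thesis by (simp add: h_def L_def)
      qed
      finally show "{W \<in> space (gauss_matrix n). real (L_tau \<tau> n W) \<ge> t_fun n \<tau> + real r} \<in> sets (gauss_matrix n) \<and>
         measure (gauss_matrix n) {W \<in> space (gauss_matrix n). real (L_tau \<tau> n W) \<ge> t_fun n \<tau> + real r}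
       \<le> 4 / h_fun \<tau> * (ln (real n) / h_fun \<tau>) powr (2 * real r + 2 + \<epsilon>) * real n powr (- 2 * real r)"
        unfolding set_eq using meas by simp
    qed
  qed
qed

end
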